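(* Let $E$ be an $n$-dimensional normed space over $K$ such that $\dim_{K^\vee}E^\vee=1$. Then all $(n-1)$-dimensional normed spaces of the form $E/[u]$ with $u\in E\setminus\{0\}$ are isometrically isomorphic to each other.
   Context: $K$ is a complete non-archimedean non-trivially valued field which is not spherically complete; $K^\vee$ is a fixed spherically complete immediate extension of $K$. Normed spaces are finite-dimensional non-archimedean normed spaces over $K$; $[u]$ is the $K$-span of $u$ and $E/[u]$ has the quotient norm. A subset $X\subseteq E\setminus\{0\}$ is orthogonal if $\|\sum\lambda_ix_i\|=\max\|\lambda_ix_i\|$ for finitely many distinct $x_i\in X$, $\lambda_i\in K$; $\dim_{K^\vee}E^\vee$ denotes the cardinality of a maximal orthogonal subset of $E$. *)

theory Defs
  imports Complex_Main
begin

definition na_abs :: "('k::field \<Rightarrow> real) \<Rightarrow> bool" where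
  "na_abs av \<longleftrightarrow> (\<forall>x. av x \<ge> 0) \<and> (\<forall>x. av x = 0 \<longleftrightarrow> x = 0)
     \<and> (\<forall>x y. av (x * y) = av x * av y)
     \<and> (\<forall>x y. av (x + y) \<le> max (av x) (av y))"

definition abs_nontrivial :: "('k::field \<Rightarrow> real) \<Rightarrow> bool" where
  "abs_nontrivial av \<longleftrightarrow> (\<exists>x. av x \<noteq> 0 \<and> av x \<noteq> 1)"

definition abs_complete :: "('k::field \<Rightarrow> real) \<Rightarrow> bool" where
  "abs_complete av \<longleftrightarrow> (\<forall>X :: nat \<Rightarrow> 'k.
     (\<forall>e>0. \<exists>N. \<forall>m\<ge>N. \<forall>n\<ge>N. av (X m - X n) < e)
     \<longrightarrow> (\<exists>L. \<forall>e>0. \<exists>N. \<forall>n\<ge>N. av (X n - L) < e))"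

definition closed_ball_abs :: "('k::field \<Rightarrow> real) \<Rightarrow> 'k \<Rightarrow> real \<Rightarrow> 'k set" where
  "closed_ball_abs av c r = {y. av (y - c) \<le> r}"

definition spherically_complete :: "('k::field \<Rightarrow> real) \<Rightarrow> bool" where
  "spherically_complete av \<longleftrightarrow> (\<forall>\<C>. \<C> \<noteq> {}
      \<and> \<C> \<subseteq> {closed_ball_abs av c r | c r. r > 0}
      \<and> (\<forall>A\<in>\<C>. \<forall>B\<in>\<C>. A \<subseteq> B \<or> B \<subseteq> A)
      \<longrightarrow> \<Inter>\<C> \<noteq> {})"

definition na_norm :: "('k::field \<Rightarrow> real) \<Rightarrow> ('k \<Rightarrow> 'v::ab_group_add \<Rightarrow> 'v) \<Rightarrow> ('v \<Rightarrow> real) \<Rightarrow> bool" where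
  "na_norm av scale nv \<longleftrightarrow> (\<forall>x. nv x \<ge> 0) \<and> (\<forall>x. nv x = 0 \<longleftrightarrow> x = 0)
     \<and> (\<forall>a x. nv (scale a x) = av a * nv x)
     \<and> (\<forall>x y. nv (x + y) \<le> max (nv x) (nv y))"

definition orthogonal_set :: "('k::field \<Rightarrow> 'v::ab_group_add \<Rightarrow> 'v) \<Rightarrow> ('v \<Rightarrow> real) \<Rightarrow> 'v set \<Rightarrow> bool" where
  "orthogonal_set scale nv X \<longleftrightarrow> 0 \<notin> X \<and>
     (\<forall>F (c :: 'v \<Rightarrow> 'k). finite F \<and> F \<subseteq> X \<and> F \<noteq> {} \<longrightarrow>
        nv (\<Sum>x\<in>F. scale (c x) x) = (MAX x\<in>F. nv (scale (c x) x)))"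

definition maximal_orthogonal_set :: "('k::field \<Rightarrow> 'v::ab_group_add \<Rightarrow> 'v) \<Rightarrow> ('v \<Rightarrow> real) \<Rightarrow> 'v set \<Rightarrow> bool" where
  "maximal_orthogonal_set scale nv X \<longleftrightarrow> orthogonal_set scale nv X \<and>
     (\<forall>Y. orthogonal_set scale nv Y \<and> X \<subseteq> Y \<longrightarrow> Y = X)"

text \<open>The number written dim over K-vee of E-vee: cardinality of a maximal orthogonal subset.\<close>
definition orth_dim :: "('k::field \<Rightarrow> 'v::ab_group_add \<Rightarrow> 'v) \<Rightarrow> ('v \<Rightarrow> real) \<Rightarrow> nat" where
  "orth_dim scale nv = card (SOME X. maximal_orthogonal_set scale nv X)"

definition coset :: "('k::field \<Rightarrow> 'v::ab_group_add \<Rightarrow> 'v) \<Rightarrow> 'v \<Rightarrow> 'v \<Rightarrow> 'v set" where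
  "coset scale u x = {x + scale a u | a. True}"

definition quot_space :: "('k::field \<Rightarrow> 'v::ab_group_add \<Rightarrow> 'v) \<Rightarrow> 'v \<Rightarrow> 'v set set" where
  "quot_space scale u = range (coset scale u)"

definition quot_add :: "'v::ab_group_add set \<Rightarrow> 'v set \<Rightarrow> 'v set" where
  "quot_add C D = {c + d | c d. c \<in> C \<and> d \<in> D}"

definition quot_scale :: "('k::field \<Rightarrow> 'v::ab_group_add \<Rightarrow> 'v) \<Rightarrow> 'v \<Rightarrow> 'k \<Rightarrow> 'v set \<Rightarrow> 'v set" where
  "quot_scale scale u a C = {scale a c + scale b u | c b. c \<in> C}"

definition quot_norm :: "('v \<Rightarrow> real) \<Rightarrow> 'v set \<Rightarrow> real" where
  "quot_norm nv C = Inf (nv ` C)"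

definition quotients_isometric :: "('k::field \<Rightarrow> 'v::ab_group_add \<Rightarrow> 'v) \<Rightarrow> ('v \<Rightarrow> real) \<Rightarrow> 'v \<Rightarrow> 'v \<Rightarrow> bool" where
  "quotients_isometric scale nv u v \<longleftrightarrow> (\<exists>T.
     bij_betw T (quot_space scale u) (quot_space scale v)
     \<and> (\<forall>C\<in>quot_space scale u. \<forall>D\<in>quot_space scale u. T (quot_add C D) = quot_add (T C) (T D))
     \<and> (\<forall>a. \<forall>C\<in>quot_space scale u. T (quot_scale scale u a C) = quot_scale scale v a (T C))
     \<and> (\<forall>C\<in>quot_space scale u. quot_norm nv (T C) = quot_norm nv C))"

end

theory Submission
  imports Defs
begin

locale naspace = vector_space scale
  for scale :: "'k::field \<Rightarrow> 'v::ab_group_add \<Rightarrow> 'v" +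
  fixes av :: "'k \<Rightarrow> real" and nv :: "'v \<Rightarrow> real"
  assumes abs: "na_abs av" and nrm: "na_norm av scale nv"
begin

lemma av_nonneg: "av x \<ge> 0" using abs by (simp add: na_abs_def)
lemma av_zero_iff[simp]: "av x = 0 \<longleftrightarrow> x = 0" using abs by (simp add: na_abs_def)
lemma av_zero[simp]: "av 0 = 0" by simp
lemma av_mult: "av (x * y) = av x * av y" using abs by (simp add: na_abs_def)
lemma av_add: "av (x + y) \<le> max (av x) (av y)" using abs by (simp add: na_abs_def)
lemma av_one[simp]: "av 1 = 1"
proof -
  have "av 1 = av 1 * av 1" using av_mult[of 1 1] by simp
  moreover have "av 1 \<noteq> 0" by simp
  ultimately show ?thesis by (metis mult_cancel_left1)
qed
lemma av_minus_one[simp]: "av (-1) = 1"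
proof -
  have "av (-1) * av (-1) = 1" using av_mult[of "-1" "-1"] by simp
  with av_nonneg[of "-1"] show ?thesis
    by (metis abs_of_nonneg abs_square_eq_1 power2_eq_square)
qed
lemma av_uminus[simp]: "av (- x) = av x"
  using av_mult[of "-1" x] by simp
lemma av_diff_sym: "av (x - y) = av (y - x)"
  by (metis av_uminus minus_diff_eq)
lemma av_inverse: "av (inverse x) = inverse (av x)"
proof (cases "x = 0")
  case False
  have "av (inverse x) * av x = 1" using av_mult[of "inverse x" x] False by simp
  then show ?thesis by (simp add: field_simps) (metis mult.commute nonzero_eq_divide_eq av_zero_iff False)
qed simp
lemma av_pos: "x \<noteq> 0 \<Longrightarrow> av x > 0" using av_nonneg[of x] av_zero_iff[of x] by linarith

lemma nv_nonneg: "nv x \<ge> 0" using nrm by (simp add: na_norm_def)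
lemma nv_zero_iff[simp]: "nv x = 0 \<longleftrightarrow> x = 0" using nrm by (simp add: na_norm_def)
lemma nv_zero[simp]: "nv 0 = 0" by simp
lemma nv_scale: "nv (scale a x) = av a * nv x" using nrm by (simp add: na_norm_def)
lemma nv_add: "nv (x + y) \<le> max (nv x) (nv y)" using nrm by (simp add: na_norm_def)
lemma nv_pos: "x \<noteq> 0 \<Longrightarrow> nv x > 0" using nv_nonneg[of x] nv_zero_iff[of x] by linarith
lemma nv_uminus[simp]: "nv (- x) = nv x"
  using nv_scale[of "-1" x] by simp
lemma nv_diff_sym: "nv (x - y) = nv (y - x)"
  by (metis nv_uminus minus_diff_eq)
lemma nv_diff: "nv (x - y) \<le> max (nv x) (nv y)"
  using nv_add[of x "-y"] by simp
lemma nv_add_strict: assumes "nv y < nv x" shows "nv (x + y) = nv x"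
proof -
  have "nv (x + y) \<le> nv x" using nv_add[of x y] assms by simp
  moreover have "nv x \<le> max (nv (x + y)) (nv y)" using nv_diff[of "x+y" y] by simp
  ultimately show ?thesis using assms by linarith
qed
lemma nv_add_neq: assumes "nv x \<noteq> nv y" shows "nv (x + y) = max (nv x) (nv y)"
proof (cases "nv y < nv x")
  case True then show ?thesis using nv_add_strict by simp
next
  case False then have "nv x < nv y" using assms by linarith
  then show ?thesis using nv_add_strict[of x y] by (simp add: add.commute)
qed

lemma span_insert_elem:
  assumes "z \<in> span (insert v S)" obtains w l where "w \<in> span S" "z = w + scale l v"
  using assms span_breakdown_eq[of z v S] by (metis diff_add_cancel)

lemma closed_span:
  assumes cpl: "abs_complete av" and fin: "finite S"
  shows "y \<notin> span S \<Longrightarrow> \<exists>\<delta>>0. \<forall>v\<in>span S. \<delta> \<le> nv (y - v)"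
  using fin
proof (induction S arbitrary: y rule: finite_induct)
  case empty
  then show ?case by (intro exI[of _ "nv y"]) (auto intro: nv_pos)
next
  case (insert v S0)
  show ?case
  proof (cases "v \<in> span S0")
    case True
    then show ?thesis using insert span_redundant by metis
  next
    case vnot: False
    obtain \<delta>1 where d1: "\<delta>1 > 0" "\<forall>w\<in>span S0. \<delta>1 \<le> nv (v - w)" using insert.IH[OF vnot] by blast
    show ?thesis
    proof (rule ccontr)
      assume "\<not> ?thesis"
      then have H: "\<forall>\<delta>>0. \<exists>z\<in>span (insert v S0). nv (y - z) < \<delta>" by (auto simp: not_le)
      have "\<forall>k::nat. \<exists>l w. w \<in> span S0 \<and> nv (y - w - scale l v) < 1 / (real k + 1)"
      proof
        fix k :: nat
        obtain z where z: "z \<in> span (insert v S0)" "nv (y - z) < 1 / (real k + 1)"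
          using H[rule_format, of "1 / (real k + 1)"] by auto
        obtain w l where "w \<in> span S0" "z = w + scale l v" using z(1) by (rule span_insert_elem)
        then show "\<exists>l w. w \<in> span S0 \<and> nv (y - w - scale l v) < 1 / (real k + 1)"
          using z(2) by (intro exI[of _ l] exI[of _ w]) (simp add: diff_diff_eq)
      qed
      then obtain lam wk where lw: "\<And>k. wk k \<in> span S0" "\<And>k. nv (y - wk k - scale (lam k) v) < 1 / (real k + 1)"
        by metis
      have small: "\<exists>N. \<forall>k\<ge>N. 1 / (real k + 1) < e" if "e > 0" for e :: real
      proof -
        obtain N :: nat where N: "1 / e < real N" using reals_Archimedean2 by blast
        have "1 / (real k + 1) < e" if "k \<ge> N" for k
        proof -
          have "1 / e < real k + 1" using N that by linarith
          then show ?thesis using \<open>e > 0\<close> by (simp add: field_simps)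
        qed
        then show ?thesis by blast
      qed
      show False
      proof (cases "\<forall>e>0. \<exists>N. \<forall>m\<ge>N. \<forall>n\<ge>N. av (lam m - lam n) < e")
        case True
        then obtain L where L: "\<forall>e>0. \<exists>N. \<forall>n\<ge>N. av (lam n - L) < e"
          using cpl unfolding abs_complete_def by blast
        have "y - scale L v \<notin> span S0"
        proof
          assume "y - scale L v \<in> span S0"
          then have "y \<in> span (insert v S0)" using span_breakdown_eq by blast
          then show False using insert.prems by simp
        qed
        then obtain \<delta>0 where d0: "\<delta>0 > 0" "\<forall>w\<in>span S0. \<delta>0 \<le> nv (y - scale L v - w)"
          using insert.IH by blast
        define e where "e = \<delta>0 / (nv v + 1)"
        have e: "e > 0" "e * nv v < \<delta>0" using d0(1) nv_nonneg[of v]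
          by (auto simp: e_def field_simps)
        obtain N1 where N1: "\<forall>n\<ge>N1. av (lam n - L) < e" using L e(1) by blast
        obtain N2 where N2: "\<forall>k\<ge>N2. 1 / (real k + 1) < \<delta>0" using small d0(1) by blast
        define n where "n = max N1 N2"
        have a: "nv (y - wk n - scale (lam n) v) < \<delta>0" using lw(2)[of n] N2[rule_format, of n] n_def by linarith
        have "av (lam n - L) * nv v \<le> e * nv v"
          using N1 n_def nv_nonneg[of v] by (intro mult_right_mono) (auto intro: less_imp_le)
        then have b: "nv (scale (lam n - L) v) < \<delta>0" using e by (simp add: nv_scale)
        have eq: "y - scale L v - wk n = (y - wk n - scale (lam n) v) + scale (lam n - L) v"
          by (simp add: algebra_simps)
        have "nv (y - scale L v - wk n) < \<delta>0"
          using nv_add[of "y - wk n - scale (lam n) v" "scale (lam n - L) v"] a b unfolding eq by linarith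
        then show False using d0(2) lw(1)[of n] by force
      next
        case False
        then obtain e where e: "e > 0" "\<forall>N. \<exists>m\<ge>N. \<exists>n\<ge>N. \<not> av (lam m - lam n) < e" by blast
        obtain N where N: "\<forall>k\<ge>N. 1 / (real k + 1) < e * \<delta>1" using small e(1) d1(1) by (meson mult_pos_pos)
        obtain m n where mn: "m \<ge> N" "n \<ge> N" "av (lam m - lam n) \<ge> e" using e(2) by (meson not_less)
        define d where "d = lam m - lam n"
        have dnz: "d \<noteq> 0" using mn(3) e(1) d_def by auto
        have eq1: "(y - wk n - scale (lam n) v) - (y - wk m - scale (lam m) v) = (wk m - wk n) + scale d v"
          by (simp add: d_def algebra_simps)
        have "nv ((wk m - wk n) + scale d v) < e * \<delta>1"
          using nv_diff[of "y - wk n - scale (lam n) v" "y - wk m - scale (lam m) v"] lw(2)[of n] lw(2)[of m] N[rule_format, of n] N[rule_format, of m] mn eq1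
          by (metis (no_types, lifting) max_less_iff_conj order_le_less_trans order_less_trans)
        moreover have "(wk m - wk n) + scale d v = scale d (v - scale (- inverse d) (wk m - wk n))"
          using dnz by (simp add: algebra_simps)
        moreover have "scale (- inverse d) (wk m - wk n) \<in> span S0"
          using lw(1) by (intro span_scale span_diff)
        then have "\<delta>1 \<le> nv (v - scale (- inverse d) (wk m - wk n))" using d1(2) by blast
        then have "av d * \<delta>1 \<le> av d * nv (v - scale (- inverse d) (wk m - wk n))"
          using av_nonneg by (rule mult_left_mono)
        moreover have "e * \<delta>1 \<le> av d * \<delta>1" using mn(3) d_def d1(1) by (simp add: mult_right_mono)
        ultimately show False by (simp add: nv_scale)
      qed
    qed
  qed
qed

lemma key_ineq:
  assumes D: "\<forall>v\<in>span T. D \<le> nv (y - v)" and v0: "v0 \<in> span T" and x: "x \<in> span T"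
    and s: "0 < \<sigma>" "\<sigma> \<le> 1" and lt: "\<sigma> * nv (y - v0) < D"
  shows "\<sigma> * nv x \<le> nv (x + scale b (y - v0))"
proof (cases "b = 0")
  case True then show ?thesis using s nv_nonneg[of x] by (simp add: mult_left_le_one_le)
next
  case False
  have eq: "x + scale b (y - v0) = scale b (y - (v0 - scale (inverse b) x))"
    using False by (simp add: algebra_simps)
  have "v0 - scale (inverse b) x \<in> span T" using v0 x by (intro span_diff span_scale)
  then have "D \<le> nv (y - (v0 - scale (inverse b) x))" using D by blast
  then have "av b * D \<le> nv (x + scale b (y - v0))" unfolding eq nv_scale
    using av_nonneg by (rule mult_left_mono)
  moreover have "av b * (\<sigma> * nv (y - v0)) \<le> av b * D" using lt av_nonneg[of b] by (intro mult_left_mono) auto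
  ultimately have A: "\<sigma> * nv (scale b (y - v0)) \<le> nv (x + scale b (y - v0))"
    by (simp add: nv_scale mult.left_commute)
  have "nv x \<le> max (nv (x + scale b (y - v0))) (nv (scale b (y - v0)))"
    using nv_diff[of "x + scale b (y - v0)" "scale b (y - v0)"] by simp
  then show ?thesis
  proof (cases "nv x \<le> nv (x + scale b (y - v0))")
    case True
    have "\<sigma> * nv x \<le> nv x" using s nv_nonneg[of x] by (simp add: mult_left_le_one_le)
    then show ?thesis using True by linarith
  next
    case False
    then have "nv x \<le> nv (scale b (y - v0))" using \<open>nv x \<le> max _ _\<close> by linarith
    then have "\<sigma> * nv x \<le> \<sigma> * nv (scale b (y - v0))" using s by simp
    then show ?thesis using A by linarith
  qed
qed

lemma functional_exists:
  assumes cpl: "abs_complete av" and fin: "finite S" and p: "p \<noteq> 0"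
  shows "0 < \<rho> \<Longrightarrow> \<rho> < 1 \<Longrightarrow> \<exists>f. (\<forall>x\<in>span (insert p S). \<forall>y\<in>span (insert p S). f (x + y) = f x + f y)
     \<and> (\<forall>a. \<forall>x\<in>span (insert p S). f (scale a x) = a * f x) \<and> f p = 1
     \<and> (\<forall>x\<in>span (insert p S). \<rho> * av (f x) * nv p \<le> nv x)"
  using fin
proof (induction S arbitrary: \<rho> rule: finite_induct)
  case empty
  define f where "f x = (THE a. x = scale a p)" for x
  have fe: "f (scale a p) = a" for a unfolding f_def using p by (intro the_equality) auto
  have sp: "span (insert p {}) = range (\<lambda>k. scale k p)" using span_singleton by simp
  show ?case
  proof (intro exI[of _ f] conjI ballI allI)
    fix x y assume "x \<in> span (insert p {})" "y \<in> span (insert p {})"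
    then obtain a b where "x = scale a p" "y = scale b p" unfolding sp by auto
    then show "f (x + y) = f x + f y" by (simp add: fe scale_left_distrib[symmetric])
  next
    fix a x assume "x \<in> span (insert p {})"
    then obtain b where "x = scale b p" unfolding sp by auto
    then show "f (scale a x) = a * f x" by (simp add: fe)
  next
    show "f p = 1" using fe[of 1] by simp
  next
    fix x assume "x \<in> span (insert p {})"
    then obtain b where "x = scale b p" unfolding sp by auto
    then show "\<rho> * av (f x) * nv p \<le> nv x" using empty.prems av_nonneg[of b] nv_nonneg[of p]
      by (simp add: fe nv_scale mult.assoc mult_left_le_one_le)
  qed
next
  case (insert y S0)
  define W where "W = span (insert p S0)"
  have spc: "span (insert p (insert y S0)) = span (insert y (insert p S0))" by (simp add: insert_commute)
  show ?case
  proof (cases "y \<in> W")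
    case True
    then have "span (insert p (insert y S0)) = W" unfolding spc W_def by (rule span_redundant)
    then show ?thesis using insert.IH[OF insert.prems] unfolding W_def by simp
  next
    case ynot: False
    define \<sigma> where "\<sigma> = sqrt \<rho>"
    have s: "0 < \<sigma>" "\<sigma> < 1" "\<sigma> * \<sigma> = \<rho>" using insert.prems by (auto simp: \<sigma>_def)
    obtain f where f: "\<forall>x\<in>W. \<forall>y\<in>W. f (x + y) = f x + f y" "\<forall>a. \<forall>x\<in>W. f (scale a x) = a * f x"
      "f p = 1" "\<forall>x\<in>W. \<sigma> * av (f x) * nv p \<le> nv x"
      using insert.IH[OF s(1) s(2)] unfolding W_def by blast
    obtain \<delta>0 where d0: "\<delta>0 > 0" "\<forall>v\<in>W. \<delta>0 \<le> nv (y - v)"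
      using closed_span[OF cpl, of "insert p S0" y] insert.hyps ynot unfolding W_def by auto
    define D where "D = Inf ((\<lambda>v. nv (y - v)) ` W)"
    have ne: "(\<lambda>v. nv (y - v)) ` W \<noteq> {}" unfolding W_def using span_zero by blast
    have bdd: "bdd_below ((\<lambda>v. nv (y - v)) ` W)" using nv_nonneg by (auto intro!: bdd_belowI)
    have Dlow: "\<forall>v\<in>W. D \<le> nv (y - v)" unfolding D_def using bdd by (auto intro: cInf_lower)
    have Dpos: "D \<ge> \<delta>0" unfolding D_def using ne d0 by (auto intro: cInf_greatest)
    have "D < D / \<sigma>" using s Dpos d0(1) by (simp add: field_simps)
    then obtain v0 where v0: "v0 \<in> W" "nv (y - v0) < D / \<sigma>"
      using cInf_less_iff[OF ne bdd] unfolding D_def[symmetric] by auto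
    have lt: "\<sigma> * nv (y - v0) < D" using v0(2) s by (simp add: field_simps)
    define S' where "S' = span (insert p (insert y S0))"
    have memS': "z \<in> S' \<longleftrightarrow> (\<exists>b. z - scale b y \<in> W)" for z
      unfolding S'_def spc W_def by (rule span_breakdown_eq)
    have uniq: "b1 = b2" if "z - scale b1 y \<in> W" "z - scale b2 y \<in> W" for z b1 b2
    proof (rule ccontr)
      assume ne: "b1 \<noteq> b2"
      have "(z - scale b1 y) - (z - scale b2 y) \<in> W" using that unfolding W_def by (rule span_diff)
      then have "scale (b2 - b1) y \<in> W" by (simp add: algebra_simps)
      then have "scale (inverse (b2 - b1)) (scale (b2 - b1) y) \<in> W" unfolding W_def by (rule span_scale)
      then show False using ne ynot by simp
    qed
    define \<beta> where "\<beta> z = (THE b. z - scale b y \<in> W)" for z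
    have \<beta>: "\<beta> z = b" if "z - scale b y \<in> W" for z b
      unfolding \<beta>_def using that uniq by blast
    have \<beta>W: "z - scale (\<beta> z) y \<in> W" if "z \<in> S'" for z
      using that memS' \<beta> by metis
    define X where "X z = z - scale (\<beta> z) y + scale (\<beta> z) v0" for z
    have XW: "X z \<in> W" if "z \<in> S'" for z
      unfolding X_def using \<beta>W[OF that] v0(1) unfolding W_def by (intro span_add span_scale)
    define g where "g z = f (X z)" for z
    have subS: "subspace S'" unfolding S'_def by (rule subspace_span)
    show ?thesis
    proof (intro exI[of _ g] conjI ballI allI)
      fix x z assume xz: "x \<in> span (insert p (insert y S0))" "z \<in> span (insert p (insert y S0))"
      then have xz': "x \<in> S'" "z \<in> S'" unfolding S'_def by auto
      have "(x + z) - scale (\<beta> x + \<beta> z) y = (x - scale (\<beta> x) y) + (z - scale (\<beta> z) y)"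
        by (simp add: algebra_simps)
      also have "\<dots> \<in> W" using \<beta>W[OF xz'(1)] \<beta>W[OF xz'(2)] unfolding W_def by (rule span_add)
      finally have "\<beta> (x + z) = \<beta> x + \<beta> z" by (rule \<beta>)
      then have "X (x + z) = X x + X z" unfolding X_def by (simp add: algebra_simps)
      then show "g (x + z) = g x + g z" unfolding g_def using f(1) XW xz' by simp
    next
      fix a x assume x: "x \<in> span (insert p (insert y S0))"
      then have x': "x \<in> S'" unfolding S'_def by auto
      have "scale a x - scale (a * \<beta> x) y = scale a (x - scale (\<beta> x) y)"
        by (simp add: algebra_simps)
      also have "\<dots> \<in> W" using \<beta>W[OF x'] unfolding W_def by (rule span_scale)
      finally have "\<beta> (scale a x) = a * \<beta> x" by (rule \<beta>)
      then have "X (scale a x) = scale a (X x)" unfolding X_def by (simp add: algebra_simps)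
      then show "g (scale a x) = a * g x" unfolding g_def using f(2) XW x' by simp
    next
      have "p - scale 0 y \<in> W" unfolding W_def by (simp add: span_base)
      then have "\<beta> p = 0" by (rule \<beta>)
      then show "g p = 1" unfolding g_def X_def using f(3) by simp
    next
      fix z assume z: "z \<in> span (insert p (insert y S0))"
      then have z': "z \<in> S'" unfolding S'_def by auto
      have zeq: "z = X z + scale (\<beta> z) (y - v0)" unfolding X_def by (simp add: algebra_simps)
      have "\<sigma> * nv (X z) \<le> nv (X z + scale (\<beta> z) (y - v0))"
        using key_ineq[of "insert p S0" D y v0 "X z" \<sigma> "\<beta> z"] Dlow v0(1) XW[OF z'] s lt
        unfolding W_def by auto
      then have A: "\<sigma> * nv (X z) \<le> nv z" using zeq by simp
      have "\<sigma> * av (f (X z)) * nv p \<le> nv (X z)" using f(4) XW[OF z'] by blast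
      then have "\<sigma> * (\<sigma> * av (f (X z)) * nv p) \<le> \<sigma> * nv (X z)" using s by simp
      moreover have "\<sigma> * (\<sigma> * av (f (X z)) * nv p) = \<rho> * av (f (X z)) * nv p"
        using s(3) by (simp add: mult.assoc[symmetric])
      ultimately show "\<rho> * av (g z) * nv p \<le> nv z" unfolding g_def using A by linarith
    qed
  qed
qed

definition iso_rel :: "'v \<Rightarrow> 'v \<Rightarrow> bool" where
  "iso_rel u w \<longleftrightarrow> (\<exists>A B c. (\<forall>x y. A (x + y) = A x + A y) \<and> (\<forall>a x. A (scale a x) = scale a (A x))
     \<and> (\<forall>x. B (A x) = x) \<and> (\<forall>y. A (B y) = y) \<and> (\<forall>x. nv (A x) = nv x) \<and> c \<noteq> 0 \<and> A u = scale c w)"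

lemma iso_rel_refl: "iso_rel u u"
  unfolding iso_rel_def by (intro exI[of _ id] exI[of _ 1]) auto

lemma iso_rel_core:
  assumes cpl: "abs_complete av" and fin: "finite B0" and spB: "span B0 = UNIV"
    and u: "u \<noteq> 0" and lt: "nv (w - u) < nv u"
  shows "iso_rel u w"
proof -
  define t where "t = nv (w - u)"
  define \<rho> where "\<rho> = (t / nv u + 1) / 2"
  have nu: "nv u > 0" using u by (rule nv_pos)
  have t0: "t \<ge> 0" unfolding t_def by (rule nv_nonneg)
  have tl: "t < nv u" using lt t_def by simp
  have q: "0 \<le> t / nv u" "t / nv u < 1" using nu t0 tl by (auto simp: divide_simps)
  have r: "0 < \<rho>" "\<rho> < 1" using q by (auto simp: \<rho>_def)
  have gen: "\<And>N::real. N > 0 \<Longrightarrow> (t / N + 1) / 2 * N = (t + N) / 2" by (simp add: field_simps)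
  have "\<rho> * nv u = (t + nv u) / 2" unfolding \<rho>_def using gen[OF nu] .
  moreover have "t < (t + nv u) / 2" using tl by (simp add: field_simps)
  ultimately have rt: "t < \<rho> * nv u" by simp
  have spU: "span (insert u B0) = UNIV" using span_mono[of B0 "insert u B0"] spB by auto
  obtain f where f: "\<forall>x y. f (x + y) = f x + f y" "\<forall>a x. f (scale a x) = a * f x" "f u = 1"
      "\<forall>x. \<rho> * av (f x) * nv u \<le> nv x"
    using functional_exists[OF cpl fin u r] unfolding spU by blast
  have f0: "f 0 = 0" using f(2)[rule_format, of 0 0] by simp
  have fdiff: "f (x - y) = f x - f y" for x y using f(1)[rule_format, of "x - y" y] by simp
  have bound: "av (f x) * t < nv x" if "x \<noteq> 0" for x
  proof (cases "f x = 0")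
    case True then show ?thesis using nv_pos[OF that] by simp
  next
    case False
    have "av (f x) * t < av (f x) * (\<rho> * nv u)" using av_pos[OF False] rt by simp
    then show ?thesis using f(4)[rule_format, of x] by (simp add: mult_ac)
  qed
  have fw: "f w = 1 + f (w - u)" using f(1)[rule_format, of u "w - u"] f(3) by simp
  have fwnz: "f w \<noteq> 0"
  proof (cases "w = u")
    case True then show ?thesis using f(3) by simp
  next
    case False
    then have "av (f (w - u)) * t < t" using bound[of "w - u"] t_def by simp
    then have "av (f (w - u)) < 1" using t0 by (metis mult_less_cancel_right2 not_le mult_nonneg_nonneg av_nonneg)
    then have "f (w - u) \<noteq> -1" by auto
    then show ?thesis unfolding fw by (metis add.commute add_eq_0_iff)
  qed
  define A where "A x = x + scale (f x) (w - u)" for x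
  define B where "B y = y - scale (f y / f w) (w - u)" for y
  have fB: "f (B y) = f y / f w" for y
  proof -
    have "f (B y) = f y - (f y / f w) * f (w - u)" unfolding B_def using fdiff f(2) by simp
    also have "\<dots> = f y / f w" using fwnz fw by (simp add: field_simps)
    finally show ?thesis .
  qed
  have fA: "f (A x) = f x * f w" for x
  proof -
    have "f (A x) = f x + f x * f (w - u)" unfolding A_def using f(1) f(2) by simp
    then show ?thesis using fw by (simp add: algebra_simps)
  qed
  show ?thesis unfolding iso_rel_def
  proof (rule exI[of _ A], rule exI[of _ B], rule exI[of _ 1], intro conjI allI)
    fix x y show "A (x + y) = A x + A y" unfolding A_def using f(1) by (simp add: algebra_simps)
  next
    fix a x show "A (scale a x) = scale a (A x)" unfolding A_def using f(2) by (simp add: algebra_simps)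
  next
    fix x show "B (A x) = x" unfolding B_def fA using fwnz unfolding A_def by simp
  next
    fix y show "A (B y) = y" unfolding A_def fB unfolding B_def by simp
  next
    fix x show "nv (A x) = nv x"
    proof (cases "x = 0")
      case True then show ?thesis using f0 by (simp add: A_def)
    next
      case False
      have "nv (scale (f x) (w - u)) < nv x" using bound[OF False] by (simp add: nv_scale t_def)
      then show ?thesis unfolding A_def by (rule nv_add_strict)
    qed
  next
    show "A u = scale 1 w" unfolding A_def f(3) by simp
  qed simp
qed

lemma inv_linear:
  assumes A: "\<forall>x y. A (x + y) = A x + A y" "\<forall>a x. A (scale a x) = scale a (A x)"
    and BA: "\<forall>x. B (A x) = x" and AB: "\<forall>y. A (B y) = y"
  shows "B (x + y) = B x + B y" "B (scale a x) = scale a (B x)"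
proof -
  have "B (x + y) = B (A (B x) + A (B y))" using AB by simp
  also have "\<dots> = B (A (B x + B y))" using A by simp
  also have "\<dots> = B x + B y" using BA by simp
  finally show "B (x + y) = B x + B y" .
  have "B (scale a x) = B (scale a (A (B x)))" using AB by simp
  also have "\<dots> = B (A (scale a (B x)))" using A by simp
  also have "\<dots> = scale a (B x)" using BA by simp
  finally show "B (scale a x) = scale a (B x)" .
qed

lemma iso_rel_comp:
  assumes 1: "iso_rel x0 u" and 2: "iso_rel x0 w"
  shows "iso_rel u w"
proof -
  obtain A1 B1 c1 where a1: "\<forall>x y. A1 (x + y) = A1 x + A1 y" "\<forall>a x. A1 (scale a x) = scale a (A1 x)"
     "\<forall>x. B1 (A1 x) = x" "\<forall>y. A1 (B1 y) = y" "\<forall>x. nv (A1 x) = nv x" "c1 \<noteq> 0" "A1 x0 = scale c1 u"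
    using 1 unfolding iso_rel_def by blast
  obtain A2 B2 c2 where a2: "\<forall>x y. A2 (x + y) = A2 x + A2 y" "\<forall>a x. A2 (scale a x) = scale a (A2 x)"
     "\<forall>x. B2 (A2 x) = x" "\<forall>y. A2 (B2 y) = y" "\<forall>x. nv (A2 x) = nv x" "c2 \<noteq> 0" "A2 x0 = scale c2 w"
    using 2 unfolding iso_rel_def by blast
  note b1 = inv_linear[OF a1(1,2,3,4)]
  have B1u: "B1 u = scale (inverse c1) x0"
  proof -
    have "B1 (scale c1 u) = x0" using a1(3,7) by metis
    then have "scale c1 (B1 u) = x0" using b1(2) by simp
    then show ?thesis using a1(6) by (metis scale_scale left_inverse scale_one)
  qed
  have nB1: "nv (B1 y) = nv y" for y using a1(4,5) by metis
  show ?thesis unfolding iso_rel_def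
  proof (rule exI[of _ "A2 \<circ> B1"], rule exI[of _ "A1 \<circ> B2"], rule exI[of _ "inverse c1 * c2"], intro conjI allI)
    fix x y show "(A2 \<circ> B1) (x + y) = (A2 \<circ> B1) x + (A2 \<circ> B1) y" using b1(1) a2(1) by simp
  next
    fix a x show "(A2 \<circ> B1) (scale a x) = scale a ((A2 \<circ> B1) x)" using b1(2) a2(2) by simp
  next
    fix x show "(A1 \<circ> B2) ((A2 \<circ> B1) x) = x" using a1(4) a2(3) by simp
  next
    fix y show "(A2 \<circ> B1) ((A1 \<circ> B2) y) = y" using a1(3) a2(4) by simp
  next
    fix x show "nv ((A2 \<circ> B1) x) = nv x" using a2(5) nB1 by simp
  next
    show "inverse c1 * c2 \<noteq> 0" using a1(6) a2(6) by simp
  next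
    show "(A2 \<circ> B1) u = scale (inverse c1 * c2) w" using B1u a2(2,7) by simp
  qed
qed

lemma iso_rel_scale:
  assumes "iso_rel p (scale k q)" "k \<noteq> 0" shows "iso_rel p q"
proof -
  obtain A B c where a: "\<forall>x y. A (x + y) = A x + A y" "\<forall>a x. A (scale a x) = scale a (A x)"
     "\<forall>x. B (A x) = x" "\<forall>y. A (B y) = y" "\<forall>x. nv (A x) = nv x" "c \<noteq> 0" "A p = scale c (scale k q)"
    using assms(1) unfolding iso_rel_def by blast
  show ?thesis unfolding iso_rel_def
    using a assms(2) by (intro exI[of _ A] exI[of _ B]) (intro exI[of _ "c * k"], simp)
qed

lemma iso_rel_quot:
  assumes "iso_rel u w" shows "quotients_isometric scale nv u w"
proof -
  obtain A B c where a: "\<forall>x y. A (x + y) = A x + A y" "\<forall>a x. A (scale a x) = scale a (A x)"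
     "\<forall>x. B (A x) = x" "\<forall>y. A (B y) = y" "\<forall>x. nv (A x) = nv x" "c \<noteq> 0" "A u = scale c w"
    using assms unfolding iso_rel_def by blast
  have injA: "inj A" using a(3) by (metis injI)
  have imc: "A ` coset scale u x = coset scale w (A x)" for x
  proof
    show "A ` coset scale u x \<subseteq> coset scale w (A x)"
    proof
      fix z assume "z \<in> A ` coset scale u x"
      then obtain b where "z = A (x + scale b u)" unfolding coset_def by auto
      then have "z = A x + scale (b * c) w" using a(1,2,7) by simp
      then show "z \<in> coset scale w (A x)" unfolding coset_def by blast
    qed
  next
    show "coset scale w (A x) \<subseteq> A ` coset scale u x"
    proof
      fix z assume "z \<in> coset scale w (A x)"
      then obtain b where z: "z = A x + scale b w" unfolding coset_def by auto
      have "A (x + scale (b / c) u) = z" using a(1,2,6,7) z by simp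
      then show "z \<in> A ` coset scale u x" unfolding coset_def by blast
    qed
  qed
  show ?thesis unfolding quotients_isometric_def
  proof (rule exI[of _ "image A"], intro conjI ballI allI)
    show "bij_betw (image A) (quot_space scale u) (quot_space scale w)"
    proof (rule bij_betw_imageI)
      show "inj_on (image A) (quot_space scale u)" using injA by (meson inj_image_eq_iff inj_onI)
      show "image A ` quot_space scale u = quot_space scale w"
      proof
        show "image A ` quot_space scale u \<subseteq> quot_space scale w"
          unfolding quot_space_def using imc by auto
        show "quot_space scale w \<subseteq> image A ` quot_space scale u"
        proof
          fix C assume "C \<in> quot_space scale w"
          then obtain y where "C = coset scale w y" unfolding quot_space_def by auto
          then have "C = A ` coset scale u (B y)" using imc a(4) by simp
          then show "C \<in> image A ` quot_space scale u" unfolding quot_space_def by blast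
        qed
      qed
    qed
  next
    fix C D
    show "A ` quot_add C D = quot_add (A ` C) (A ` D)"
      unfolding quot_add_def using a(1) by (auto simp: image_iff) (metis)
  next
    fix aa C
    show "A ` quot_scale scale u aa C = quot_scale scale w aa (A ` C)"
    proof
      show "A ` quot_scale scale u aa C \<subseteq> quot_scale scale w aa (A ` C)"
      proof
        fix z assume "z \<in> A ` quot_scale scale u aa C"
        then obtain x b where xb: "x \<in> C" "z = A (scale aa x + scale b u)" unfolding quot_scale_def by auto
        then have "z = scale aa (A x) + scale (b * c) w" using a(1,2,7) by simp
        then show "z \<in> quot_scale scale w aa (A ` C)" unfolding quot_scale_def using xb(1) by blast
      qed
      show "quot_scale scale w aa (A ` C) \<subseteq> A ` quot_scale scale u aa C"
      proof
        fix z assume "z \<in> quot_scale scale w aa (A ` C)"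
        then obtain x b where xb: "x \<in> C" "z = scale aa (A x) + scale b w" unfolding quot_scale_def by auto
        have "A (scale aa x + scale (b / c) u) = z" using a(1,2,6,7) xb(2) by simp
        then show "z \<in> A ` quot_scale scale u aa C" unfolding quot_scale_def using xb(1) by blast
      qed
    qed
  next
    fix C
    have "nv ` (A ` C) = nv ` C" using a(5) by (simp add: image_image)
    then show "quot_norm nv (A ` C) = quot_norm nv C" unfolding quot_norm_def by simp
  qed
qed

lemma orth_indep:
  assumes "orthogonal_set scale nv X" shows "independent X"
proof
  assume "dependent X"
  then obtain T u where T: "finite T" "T \<subseteq> X" "(\<Sum>v\<in>T. scale (u v) v) = 0" "\<exists>v\<in>T. u v \<noteq> 0"
    unfolding dependent_explicit by blast
  then obtain v where v: "v \<in> T" "u v \<noteq> 0" by blast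
  have "0 \<notin> X" using assms unfolding orthogonal_set_def by blast
  then have "v \<noteq> 0" using v T(2) by blast
  have "nv (\<Sum>v\<in>T. scale (u v) v) = (MAX x\<in>T. nv (scale (u x) x))"
    using assms T(1,2) v(1) unfolding orthogonal_set_def by blast
  moreover have "nv (scale (u v) v) \<le> (MAX x\<in>T. nv (scale (u x) x))" using T(1) v(1) by simp
  moreover have "nv (scale (u v) v) > 0" using v(2) \<open>v \<noteq> 0\<close> by (intro nv_pos) simp
  ultimately show False using T(3) by simp
qed

lemma nonorth_pair:
  assumes x0: "x0 \<noteq> 0" and u: "u \<noteq> 0" and ne: "u \<noteq> x0"
    and no: "\<not> orthogonal_set scale nv {x0, u}"
  shows "\<exists>a b. a \<noteq> 0 \<and> b \<noteq> 0 \<and> nv (scale a x0 + scale b u) < nv (scale a x0)"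
proof -
  obtain F c where F: "finite F" "F \<subseteq> {x0, u}" "F \<noteq> {}"
    "nv (\<Sum>x\<in>F. scale (c x) x) \<noteq> (MAX x\<in>F. nv (scale (c x) x))"
    using no x0 u unfolding orthogonal_set_def by blast
  have "F = {x0} \<or> F = {u} \<or> F = {x0, u}" using F(2,3) by blast
  then have FF: "F = {x0, u}" using F(4) by auto
  define a where "a = c x0"
  define b where "b = c u"
  have neq: "nv (scale a x0 + scale b u) \<noteq> max (nv (scale a x0)) (nv (scale b u))"
    using F(4) ne unfolding FF a_def b_def by simp
  have eq: "nv (scale a x0) = nv (scale b u)" using neq nv_add_neq by blast
  have lt: "nv (scale a x0 + scale b u) < nv (scale a x0)"
    using neq eq nv_add[of "scale a x0" "scale b u"] by simp
  have "a \<noteq> 0" using lt nv_nonneg[of "scale a x0 + scale b u"] by auto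
  moreover have "b \<noteq> 0" using lt eq nv_nonneg[of "scale a x0 + scale b u"] by auto
  ultimately show ?thesis using lt by blast
qed

end

theorem mainTheorem9:
  fixes av :: "'k::field \<Rightarrow> real"
    and scale :: "'k \<Rightarrow> 'v::ab_group_add \<Rightarrow> 'v"
    and nv :: "'v \<Rightarrow> real"
    and n :: nat
  assumes "na_abs av" and "abs_nontrivial av" and "abs_complete av"
    and "\<not> spherically_complete av"
    and "vector_space scale"
    and "\<exists>B. finite B \<and> \<not> module.dependent scale B
              \<and> module.span scale B = UNIV \<and> card B = n"
    and "na_norm av scale nv"
    and "orth_dim scale nv = 1"
  shows "\<forall>u w. u \<noteq> 0 \<and> w \<noteq> 0 \<longrightarrow> quotients_isometric scale nv u w"
proof -
  interpret naspace scale av nv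
    using assms(1,5,7) by (simp add: naspace_def naspace_axioms_def)
  obtain B0 where B0: "finite B0" "span B0 = UNIV" using assms(6) by blast
  have bnd: "finite X \<and> card X \<le> card B0" if "orthogonal_set scale nv X" for X
    using independent_span_bound[OF B0(1) orth_indep[OF that]] B0(2) by simp
  have o0: "orthogonal_set scale nv {}" unfolding orthogonal_set_def by auto
  obtain X where X: "orthogonal_set scale nv X" "\<forall>Y. orthogonal_set scale nv Y \<longrightarrow> card Y \<le> card X"
    using Lattices_Big.ex_has_greatest_nat[of "orthogonal_set scale nv" "{}" card "Suc (card B0)"] o0 bnd
    by (metis le_imp_less_Suc)
  have "maximal_orthogonal_set scale nv X"
    unfolding maximal_orthogonal_set_def
  proof (intro conjI allI impI X(1))
    fix Y assume Y: "orthogonal_set scale nv Y \<and> X \<subseteq> Y"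
    have "finite Y" "card Y \<le> card X" using bnd[of Y] X(2) Y by auto
    moreover have "card X \<le> card Y" using Y \<open>finite Y\<close> by (simp add: card_mono)
    ultimately show "Y = X" using card_subset_eq[of Y X] Y by simp
  qed
  then have mx: "maximal_orthogonal_set scale nv (SOME X. maximal_orthogonal_set scale nv X)"
    by (rule someI)
  define X0 where "X0 = (SOME X. maximal_orthogonal_set scale nv X)"
  have "card X0 = 1" using assms(8) unfolding orth_dim_def X0_def .
  then obtain x0 where x0: "X0 = {x0}" by (rule card_1_singletonE)
  have mx0: "orthogonal_set scale nv {x0}" "\<forall>Y. orthogonal_set scale nv Y \<and> {x0} \<subseteq> Y \<longrightarrow> Y = {x0}"
  proof -
    have "maximal_orthogonal_set scale nv {x0}" using mx unfolding X0_def[symmetric] x0 .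
    then show "orthogonal_set scale nv {x0}" "\<forall>Y. orthogonal_set scale nv Y \<and> {x0} \<subseteq> Y \<longrightarrow> Y = {x0}"
      unfolding maximal_orthogonal_set_def by auto
  qed
  have x0nz: "x0 \<noteq> 0" using mx0(1) unfolding orthogonal_set_def by auto
  have rel: "iso_rel x0 u" if u: "u \<noteq> 0" for u
  proof (cases "u = x0")
    case True then show ?thesis by (simp add: iso_rel_refl)
  next
    case False
    have "\<not> orthogonal_set scale nv {x0, u}"
      using mx0(2)[rule_format, of "{x0, u}"] False by auto
    then obtain a b where ab: "a \<noteq> 0" "b \<noteq> 0" "nv (scale a x0 + scale b u) < nv (scale a x0)"
      using nonorth_pair[OF x0nz u False] by blast
    define q where "q = scale (- (b / a)) u"
    have "x0 - q = scale (inverse a) (scale a x0 + scale b u)"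
      using ab(1) by (simp add: q_def algebra_simps divide_inverse)
    then have "nv (q - x0) = av (inverse a) * nv (scale a x0 + scale b u)"
      by (simp add: nv_diff_sym[of q] nv_scale)
    also have "\<dots> < av (inverse a) * nv (scale a x0)"
      using ab(1,3) by (intro mult_strict_left_mono av_pos) simp_all
    also have "\<dots> = nv x0" using ab(1) by (simp add: nv_scale av_mult[symmetric])
    finally have "iso_rel x0 q" using iso_rel_core[OF assms(3) B0 x0nz] by blast
    then show ?thesis unfolding q_def using ab by (intro iso_rel_scale[of x0 "- (b / a)" u]) auto
  qed
  show ?thesis
  proof (intro allI impI)
    fix u w :: 'v assume "u \<noteq> 0 \<and> w \<noteq> 0"
    then show "quotients_isometric scale nv u w"
      using rel iso_rel_comp iso_rel_quot by blast
  qed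
qed

end
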